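(* The language $\{\,b^{2^m}c^m\mid m\ge1\,\}$ belongs to $\mathscr{L}_{rt}(\mathrm{MC\text{-}OCA}(\log n))$, i.e., it is accepted by a real-time one-way cellular automaton in which, on every accepted input $w$, each pair of neighboring cells communicates $O(\log|w|)$ times.
   Context: A CA is $\langle S,F,A,B,\#,b_l,b_r,\delta\rangle$ with communication functions $b_l,b_r:S\to B\cup\{\bot\}$ ($\bot$: nothing sent) and local transition $\delta:(B\cup\{\#,\bot\})\times S\times(B\cup\{\#,\bot\})\to S$; cells $1..|w|$ start with input letters and update synchronously by $c_{t+1}(i)=\delta(b_r(c_t(i-1)),c_t(i),b_l(c_t(i+1)))$, outer cells receiving $\#$ once at the first step and $\bot$ afterwards. Acceptance: leftmost cell enters an accepting state; real time: within $|w|$ steps. OCA: $b_r\equiv\bot$, leftmost cell gets no boundary symbol. $\mathrm{com}(i,t)$: number of steps $j<t$ with $b_r(c_j(i))\ne\bot$ or $b_l(c_j(i+1))\ne\bot$; $\mathrm{mcom}(w)=\max_{1\le i\le|w|-1}\mathrm{com}(i,t(|w|))$. $\mathrm{MC\text{-}OCA}(f)$: OCAs accepting every accepted $w$ with $\mathrm{mcom}(w)\le g(|w|)$ for some $g\in O(f)$. *)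

theory Defs
  imports Main "HOL-Library.Landau_Symbols"
begin

text \<open>Messages a cell can receive: a communication symbol, the boundary symbol #,
  or nothing (bottom).\<close>
datatype 'b cmsg = Sym 'b | Border | Silent

definition to_msg :: "'b option \<Rightarrow> 'b cmsg" where
  "to_msg x = (case x of None \<Rightarrow> Silent | Some b \<Rightarrow> Sym b)"

text \<open>Input letters are identified with states
  via the injective map inp.  None in bl/br means nothing is sent.\<close>
record ('a, 's, 'b) ca =
  states :: "'s set"
  acc :: "'s set"
  inp :: "'a \<Rightarrow> 's"
  comm :: "'b set"
  bl :: "'s \<Rightarrow> 'b option"
  br :: "'s \<Rightarrow> 'b option"
  delta :: "'b cmsg \<Rightarrow> 's \<Rightarrow> 'b cmsg \<Rightarrow> 's"

definition valid_msg :: "'b set \<Rightarrow> 'b cmsg set" where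
  "valid_msg B = Sym ` B \<union> {Border, Silent}"

definition wf_ca :: "('a, 's, 'b) ca \<Rightarrow> bool" where
  "wf_ca M \<longleftrightarrow> finite (states M) \<and> finite (comm M) \<and> acc M \<subseteq> states M
     \<and> inj (inp M) \<and> range (inp M) \<subseteq> states M
     \<and> (\<forall>s\<in>states M. bl M s \<in> Some ` comm M \<union> {None})
     \<and> (\<forall>s\<in>states M. br M s \<in> Some ` comm M \<union> {None})
     \<and> (\<forall>s\<in>states M. \<forall>x\<in>valid_msg (comm M). \<forall>y\<in>valid_msg (comm M).
            delta M x s y \<in> states M)"

definition is_oca :: "('a, 's, 'b) ca \<Rightarrow> bool" where
  "is_oca M \<longleftrightarrow> wf_ca M \<and> (\<forall>s. br M s = None)"

text \<open>Configuration of the OCA at time t on input w (cells 1..length w).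
  The leftmost cell receives no boundary symbol; the rightmost cell receives #
  at the first step and nothing afterwards.\<close>
primrec oca_cfg :: "('a, 's, 'b) ca \<Rightarrow> 'a list \<Rightarrow> nat \<Rightarrow> nat \<Rightarrow> 's" where
  "oca_cfg M w 0 = (\<lambda>i. inp M (w ! (i - 1)))"
| "oca_cfg M w (Suc t) = (\<lambda>i.
     delta M
       (if i = 1 then Silent else to_msg (br M (oca_cfg M w t (i - 1))))
       (oca_cfg M w t i)
       (if i = length w then (if t = 0 then Border else Silent)
        else to_msg (bl M (oca_cfg M w t (i + 1)))))"

definition rt_accepts :: "('a, 's, 'b) ca \<Rightarrow> 'a list \<Rightarrow> bool" where
  "rt_accepts M w \<longleftrightarrow> (\<exists>t\<le>length w. oca_cfg M w t 1 \<in> acc M)"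

definition com :: "('a, 's, 'b) ca \<Rightarrow> 'a list \<Rightarrow> nat \<Rightarrow> nat \<Rightarrow> nat" where
  "com M w i t = card {j. j < t \<and>
      (br M (oca_cfg M w j i) \<noteq> None \<or> bl M (oca_cfg M w j (i + 1)) \<noteq> None)}"

text \<open>Maximal communication between neighbouring cells, with t(|w|) = |w| (real time).\<close>
definition mcom :: "('a, 's, 'b) ca \<Rightarrow> 'a list \<Rightarrow> nat" where
  "mcom M w = Max (insert 0 {com M w i (length w) | i. 1 \<le> i \<and> i \<le> length w - 1})"

definition in_rt_MC_OCA :: "'a list set \<Rightarrow> (nat \<Rightarrow> real) \<Rightarrow> bool" where
  "in_rt_MC_OCA L f \<longleftrightarrow> (\<exists>M :: ('a, nat, nat) ca.
      is_oca M \<and> {w. rt_accepts M w} = L \<and>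
      (\<exists>g. g \<in> O(f) \<and> (\<forall>w. rt_accepts M w \<longrightarrow> real (mcom M w) \<le> g (length w))))"

datatype letter = LB | LC

definition Lbc :: "letter list set" where
  "Lbc = {replicate (2 ^ m) LB @ replicate m LC | m. m \<ge> 1}"

end

theory Submission
  imports Defs "HOL-Library.Countable"
begin

datatype msg = MBit bool | MEnd bool | MErr
datatype st = BS bool | BO bool bool | BE bool | Acc | Done | FreshC | CF bool | CE bool | CS | Err

instance msg :: countable by countable_datatype
instance st :: countable by countable_datatype

fun blS :: "st \<Rightarrow> msg option" where
  "blS (BS _) = None"
| "blS (BO _ x) = Some (MBit x)"
| "blS (BE ov) = Some (MEnd ov)"
| "blS Acc = Some (MEnd True)"
| "blS Done = None"
| "blS FreshC = Some (MBit False)"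
| "blS (CF x) = Some (MBit x)"
| "blS (CE ov) = Some (MEnd ov)"
| "blS CS = None"
| "blS Err = Some MErr"

fun bstep :: "bool \<Rightarrow> msg cmsg \<Rightarrow> st" where
  "bstep cr (Sym (MBit y)) = BO (cr \<and> y) (y \<noteq> cr)"
| "bstep cr (Sym (MEnd ov)) = (if cr \<and> \<not> ov then Acc else BE (ov \<or> cr))"
| "bstep cr Silent = BS cr"
| "bstep cr Border = Err"
| "bstep cr (Sym MErr) = Err"

fun cstep :: "msg cmsg \<Rightarrow> st" where
  "cstep (Sym (MBit y)) = CF y"
| "cstep (Sym (MEnd ov)) = CE ov"
| "cstep Silent = CS"
| "cstep Border = CE False"
| "cstep (Sym MErr) = Err"

fun dS :: "msg cmsg \<Rightarrow> st \<Rightarrow> st" where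
  "dS m Err = Err"
| "dS m (BS cr) = bstep cr m"
| "dS m (BO cr x) = bstep cr m"
| "dS m (BE ov) = (if m = Sym MErr then Err else Done)"
| "dS m Acc = (if m = Sym MErr then Err else Done)"
| "dS m Done = (if m = Sym MErr then Err else Done)"
| "dS m FreshC = (if m = Silent then Err else cstep m)"
| "dS m (CF x) = cstep m"
| "dS m (CE ov) = cstep m"
| "dS m CS = cstep m"

definition init :: "letter \<Rightarrow> st" where
  "init a = (case a of LB \<Rightarrow> BS True | LC \<Rightarrow> FreshC)"

primrec Phi :: "nat \<Rightarrow> letter list \<Rightarrow> st" where
  "Phi 0 u = init (hd u)"
| "Phi (Suc t) u = dS (if length u \<le> 1 then (if t = 0 then Border else Silent)
                      else to_msg (blS (Phi t (tl u)))) (Phi t u)"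

definition bc :: "nat \<Rightarrow> nat \<Rightarrow> letter list" where
  "bc k l = replicate k LB @ replicate l LC"

definition good :: "letter list \<Rightarrow> bool" where
  "good u \<longleftrightarrow> (\<exists>k l. 1 \<le> l \<and> u = bc k l)"

fun spec :: "letter list \<Rightarrow> nat \<Rightarrow> st \<Rightarrow> bool" where
  "spec u t (BS cr) = (cr \<and> take (Suc t) u = bc (Suc t) 0)"
| "spec u t (BO cr x) = (\<exists>k j. 1 \<le> k \<and> t = k + j \<and> take (Suc t) u = bc k (Suc j)
        \<and> x = odd (k div 2^j) \<and> cr = (k mod 2^(Suc j) = 0))"
| "spec u t FreshC = (t = 0 \<and> hd u = LC)"
| "spec u t (CF x) = (1 \<le> t \<and> take (Suc t) u = bc 0 (Suc t) \<and> \<not> x)"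
| "spec u t (CE ov) = (1 \<le> length u \<and> u = bc 0 (length u) \<and> t = length u \<and> \<not> ov)"
| "spec u t (BE ov) = (\<exists>k l. 1 \<le> k \<and> 1 \<le> l \<and> u = bc k l \<and> t = length u
        \<and> ov = (2^l \<le> k) \<and> k \<noteq> 2^l)"
| "spec u t Acc = (\<exists>l. 1 \<le> l \<and> u = bc (2^l) l \<and> t = length u)"
| "spec u t CS = (length u < t)"
| "spec u t Done = (length u < t)"
| "spec u t Err = (\<not> good u)"

fun msgok :: "letter list \<Rightarrow> nat \<Rightarrow> msg cmsg \<Rightarrow> bool" where
  "msgok v t Silent = (take (Suc t) v = bc (Suc t) 0 \<or> length v < t)"
| "msgok v t (Sym (MBit y)) = (\<exists>k j. t = k + j \<and> take (Suc t) v = bc k (Suc j) \<and> y = odd (k div 2^j))"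
| "msgok v t (Sym (MEnd ov)) = (\<exists>k l. 1 \<le> l \<and> v = bc k l \<and> t = length v \<and> ov = (2^l \<le> k))"
| "msgok v t (Sym MErr) = (\<not> good v)"
| "msgok v t Border = False"

lemma msg_lemma: "u \<noteq> [] \<Longrightarrow> spec u t s \<Longrightarrow> msgok u t (to_msg (blS s))"
proof (cases s)
  case FreshC
  assume "u \<noteq> []" "spec u t s"
  then show ?thesis using FreshC
    by (auto simp: to_msg_def bc_def intro!: exI[of _ 0] ) (cases u; simp)
next
  case (CF x)
  assume "u \<noteq> []" "spec u t s"
  then show ?thesis using CF
    by (simp add: to_msg_def) (rule exI[of _ 0], rule exI[of _ t], simp)
next
  case (CE ov)
  assume "u \<noteq> []" "spec u t s"
  then show ?thesis using CE
    by (simp add: to_msg_def) (rule exI[of _ 0], rule exI[of _ "length u"], auto)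
next
  case Acc
  assume "u \<noteq> []" "spec u t s"
  then show ?thesis using Acc
    by (auto simp: to_msg_def)
qed (auto simp: to_msg_def)

lemma bc_Suc[simp]: "bc (Suc k) l = LB # bc k l"
  by (simp add: bc_def)
lemma bc_0_Suc[simp]: "bc 0 (Suc l) = LC # bc 0 l"
  by (simp add: bc_def)
lemma bc_0_0[simp]: "bc 0 0 = []"
  by (simp add: bc_def)
lemma length_bc[simp]: "length (bc k l) = k + l"
  by (simp add: bc_def)
lemma take_bc: "take n (bc k l) = bc (min n k) (min (n - k) l)"
  by (simp add: bc_def take_replicate)
lemma bc_inj[simp]: "bc a b = bc a' b' \<longleftrightarrow> a = a' \<and> b = b'"
proof (induction a arbitrary: a')
  case 0
  show ?case
  proof (cases a')
    case 0
    then show ?thesis by (simp add: bc_def replicate_eq_replicate)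
  next
    case (Suc n)
    then show ?thesis by (cases b) (simp_all add: bc_def)
  qed
next
  case (Suc a)
  then show ?case
    by (cases a'; cases b'; simp)
qed

lemma take_bc_sub: "t = k + j \<Longrightarrow> take t (bc k (Suc j)) = bc k j"
  by (simp add: take_bc)

lemma good_tl: "good (a # v) \<Longrightarrow> v \<noteq> [] \<Longrightarrow> good v"
  unfolding good_def
proof clarify
  fix k l assume h: "1 \<le> l" "a # v = bc k l" "v \<noteq> []"
  show "\<exists>k l. 1 \<le> l \<and> v = bc k l"
  proof (cases k)
    case 0
    then obtain l' where "l = Suc l'" using h by (cases l) auto
    then have "v = bc 0 l'" using h 0 by simp
    moreover have "l' \<noteq> 0" using h \<open>v = bc 0 l'\<close> by (auto simp: bc_def)
    ultimately show ?thesis by auto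
  next
    case (Suc k')
    then show ?thesis using h by auto
  qed
qed

lemma good_last: "good u \<Longrightarrow> last u = LC"
  unfolding good_def bc_def by auto

lemma arith1:
  assumes "1 \<le> (k::nat)" "0 < (P::nat)"
  shows "(odd ((k-1) div P) \<noteq> (k mod P = 0)) = odd (k div P)
       \<and> ((k mod P = 0) \<and> odd ((k-1) div P)) = (k mod (P*2) = 0)"
proof -
  define q where "q = (k-1) div P"
  define r where "r = (k-1) mod P"
  have kq: "k = q * P + r + 1" using assms q_def r_def by simp
  have hq: "(k - Suc 0) div P = q" using q_def by simp
  have rP: "r < P" using assms r_def by simp
  have m2: "k mod (P*2) = P * (k div P mod 2) + k mod P" by (rule mod_mult2_eq)
  show ?thesis
  proof (cases "r + 1 = P")
    case True
    then have k: "k = (q+1) * P" using kq by (simp add: algebra_simps)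
    then have a: "k div P = q+1" "k mod P = 0" using assms by auto
    show ?thesis using m2 a assms hq by auto
  next
    case False
    then have "r + 1 < P" using rP by simp
    have k2: "k = (r+1) + q * P" using kq by simp
    have a: "k div P = q" "k mod P = r + 1"
      using \<open>r + 1 < P\<close> assms by (simp_all only: k2 div_mult_self1 mod_mult_self1) simp_all
    show ?thesis using m2 a assms hq by auto
  qed
qed


lemma arith2P:
  assumes "1 \<le> (k::nat)" "0 < P"
  shows "((k mod P = 0) \<and> \<not> (P \<le> k - 1) \<longrightarrow> k = P)
       \<and> (\<not> ((k mod P = 0) \<and> \<not> (P \<le> k - 1)) \<longrightarrow>
            ((P \<le> k - 1) \<or> (k mod P = 0)) = (P \<le> k) \<and> k \<noteq> P)"
proof -
  have A: "k mod P = 0 \<Longrightarrow> P \<le> k"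
  proof -
    assume "k mod P = 0"
    then obtain q where "k = P * q" by (auto elim!: dvdE simp: mod_eq_0_iff_dvd)
    moreover have "q \<noteq> 0" using assms calculation by (cases q) auto
    ultimately show ?thesis by simp
  qed
  show ?thesis using A assms by (cases "k = P") auto
qed

lemma arith2:
  assumes "1 \<le> (k::nat)"
  shows "((k mod 2^l = 0) \<and> \<not> (2^l \<le> k - 1) \<longrightarrow> k = 2^l)
       \<and> (\<not> ((k mod 2^l = 0) \<and> \<not> (2^l \<le> k - 1)) \<longrightarrow>
            ((2^l \<le> k - 1) \<or> (k mod 2^l = 0)) = (2^l \<le> k) \<and> k \<noteq> 2^l)"
  using arith2P[OF assms, of "2^l"] by simp

lemma take_LB_bc[simp]: "take t (LB # bc t 0) = bc t 0"
  by (induction t) simp_all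

lemma take_len: "take n v = bc k l \<Longrightarrow> k + l = min n (length v)"
  by (drule arg_cong[where f=length]) simp

lemma not_good_cons: "\<not> good v \<Longrightarrow> v \<noteq> [] \<Longrightarrow> \<not> good (a # v)"
  using good_tl by blast

lemma step:
  assumes u: "u = a # v" and sp: "spec u t s"
    and hm: "if v = [] then m = (if t = 0 then Border else Silent) else msgok v t m"
  shows "spec u (Suc t) (dS m s)"
proof -
  have errcase: "m = Sym MErr \<Longrightarrow> \<not> good u"
    using hm u not_good_cons by (cases "v = []") (auto split: if_splits)
  show ?thesis
  proof (cases s)
    case (BS cr)
    hence cr: cr and a: "a = LB" and tv: "take t v = bc t 0" using sp u by auto
    have tle: "t \<le> length v" using take_len[OF tv] by (simp add: min_def split: if_splits)
    show ?thesis
    proof (cases "v = []")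
      case True
      then have "t = 0" using tle by simp
      then have "m = Border" using hm True by simp
      then show ?thesis using BS u a True good_last by fastforce
    next
      case False
      with hm have mo: "msgok v t m" by simp
      show ?thesis
      proof (cases m)
        case Silent
        then have "take (Suc t) v = bc (Suc t) 0" using mo tle by auto
        then show ?thesis using BS Silent cr u a by simp
      next
        case Border then show ?thesis using mo by simp
      next
        case (Sym x)
        show ?thesis
        proof (cases x)
          case (MBit y)
          then obtain k j where h: "t = k + j" "take (Suc t) v = bc k (Suc j)" "y = odd (k div 2^j)"
            using mo Sym by auto
          have "take t (take (Suc t) v) = take t v" by simp
          then have "bc k j = bc t 0" using h tv take_bc_sub by metis
          then have kj: "k = t" "j = 0" by simp_all
          have e: "take (Suc (Suc t)) u = bc (Suc t) (Suc 0)" using u a h kj by simp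
          have y: "y = odd t" using h kj by simp
          show ?thesis using BS Sym MBit cr e y
            by (simp, intro exI[of _ "Suc t"] exI[of _ 0]) auto
        next
          case (MEnd ov)
          then obtain k l where h: "1 \<le> l" "v = bc k l" "t = length v" using mo Sym by auto
          have "take t v = v" using h by simp
          then show ?thesis using tv h by simp
        next
          case MErr
          then show ?thesis using BS Sym errcase by simp
        qed
      qed
    qed
  next
    case (BO cr x)
    then obtain k j where h0: "1 \<le> k" "t = k + j" "take (Suc t) u = bc k (Suc j)"
        "x = odd (k div 2^j)" "cr = (k mod 2^(Suc j) = 0)"
      using sp by auto
    obtain k' where k': "k = Suc k'" using h0 by (cases k) auto
    have a: "a = LB" and tv: "take t v = bc k' (Suc j)" using h0 u k' by auto
    have tle: "t \<le> length v" using take_len[OF tv] h0 k' by (auto simp: min_def split: if_splits)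
    have vne: "v \<noteq> []" using tle h0 by auto
    with hm have mo: "msgok v t m" by simp
    show ?thesis
    proof (cases m)
      case Silent
      then have "take (Suc t) v = bc (Suc t) 0" using mo tle by auto
      then have "take t (take (Suc t) v) = take t (bc (Suc t) 0)" by simp
      then have "take t v = bc t 0" by (simp add: take_bc)
      then show ?thesis using tv by simp
    next
      case Border then show ?thesis using mo by simp
    next
      case (Sym z)
      show ?thesis
      proof (cases z)
        case (MBit y)
        then obtain K J where h: "t = K + J" "take (Suc t) v = bc K (Suc J)" "y = odd (K div 2^J)"
          using mo Sym by auto
        have "take t (take (Suc t) v) = take t v" by simp
        then have "bc K J = bc k' (Suc j)" using h tv take_bc_sub by metis
        then have KJ: "K = k'" "J = Suc j" by simp_all
        have e: "take (Suc (Suc t)) u = bc k (Suc (Suc j))" using u a h KJ k' by simp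
        have ar: "(y \<noteq> cr) = odd (k div 2^(Suc j)) \<and> (cr \<and> y) = (k mod 2^(Suc (Suc j)) = 0)"
          using arith1[of k "2^(Suc j)"] h0 h KJ k' by (simp add: mult.commute)
        have d: "dS m s = BO (cr \<and> y) (y \<noteq> cr)" using BO Sym MBit by simp
        have st: "Suc t = k + Suc j" using h0 by simp
        have "spec u (Suc t) (BO (cr \<and> y) (y \<noteq> cr))"
          unfolding spec.simps
          by (rule exI[of _ k], rule exI[of _ "Suc j"]) (use h0(1) st e ar in blast)
        then show ?thesis using d by simp
      next
        case (MEnd ov)
        then obtain K l where h: "1 \<le> l" "v = bc K l" "t = length v" "ov = (2^l \<le> K)"
          using mo Sym by auto
        have uK: "u = bc (Suc K) l" using u a h by simp
        have "take (Suc t) u = u" using u h by simp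
        then have e1: "bc (Suc K) l = bc k (Suc j)" using h0(3) uK by metis
        have Kl: "k = Suc K" "l = Suc j" using bc_inj[THEN iffD1, OF e1] by auto
        have uk: "u = bc k l" using uK Kl by simp
        have lt: "Suc t = length u" using u h by simp
        note ar = arith2[of k l]
        show ?thesis
        proof (cases "cr \<and> \<not> ov")
          case True
          then have k2: "k = 2^l" using ar h0 h Kl by auto
          have uA: "u = bc (2^l) l" using uk k2 by (simp only:)
          have d: "dS m s = Acc" using True BO Sym MEnd by simp
          show ?thesis unfolding d spec.simps using uA lt h(1) by blast
        next
          case False
          then have o2: "(ov \<or> cr) = (2^l \<le> k) \<and> k \<noteq> 2^l" using ar h0 h Kl by auto
          have d: "dS m s = BE (ov \<or> cr)" using False BO Sym MEnd by simp
          show ?thesis unfolding d spec.simps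
            by (rule exI[of _ k], rule exI[of _ l]) (use o2 uk lt h(1) h0(1) in blast)
        qed
      next
        case MErr
        then show ?thesis using BO Sym errcase by simp
      qed
    qed
  next
    case FreshC
    then have t0: "t = 0" and a: "a = LC" using sp u by auto
    show ?thesis
    proof (cases "v = []")
      case True
      then have "m = Border" using hm t0 by simp
      then show ?thesis using FreshC u a True t0 by (simp add: bc_def)
    next
      case False
      with hm have mo: "msgok v t m" by simp
      show ?thesis
      proof (cases m)
        case Silent
        then have "take 1 v = bc 1 0" using mo t0 by auto
        then have "hd v = LB" using False by (cases v) (auto simp: bc_def)
        have "\<not> good u"
        proof
          assume "good u"
          then obtain k l where "u = bc k l" unfolding good_def by auto
          then show False using u a \<open>hd v = LB\<close> False
            by (cases k; cases l) (auto simp: bc_def hd_replicate)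
        qed
        then show ?thesis using FreshC Silent by simp
      next
        case Border then show ?thesis using mo by simp
      next
        case (Sym z)
        show ?thesis
        proof (cases z)
          case (MBit y)
          then obtain K J where h: "t = K + J" "take (Suc t) v = bc K (Suc J)" "y = odd (K div 2^J)"
            using mo Sym by auto
          then have "K = 0" "J = 0" using t0 by simp_all
          then show ?thesis using FreshC Sym MBit h t0 u a by simp
        next
          case (MEnd ov)
          then show ?thesis using mo Sym t0 False by auto
        next
          case MErr
          then show ?thesis using FreshC Sym errcase by simp
        qed
      qed
    qed
  next
    case (CF x)
    then have t1: "1 \<le> t" and a: "a = LC" and tv: "take t v = bc 0 t" using sp u by auto
    have tle: "t \<le> length v" using take_len[OF tv] by (simp add: min_def split: if_splits)
    have vne: "v \<noteq> []" using tle t1 by auto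
    with hm have mo: "msgok v t m" by simp
    show ?thesis
    proof (cases m)
      case Silent
      then have "take (Suc t) v = bc (Suc t) 0" using mo tle by auto
      then have "take t (take (Suc t) v) = take t (bc (Suc t) 0)" by simp
      then have "take t v = bc t 0" by (simp add: take_bc)
      then show ?thesis using tv t1 by simp
    next
      case Border then show ?thesis using mo by simp
    next
      case (Sym z)
      show ?thesis
      proof (cases z)
        case (MBit y)
        then obtain K J where h: "t = K + J" "take (Suc t) v = bc K (Suc J)" "y = odd (K div 2^J)"
          using mo Sym by auto
        have "take t (take (Suc t) v) = take t v" by simp
        then have "bc K J = bc 0 t" using h tv take_bc_sub by metis
        then have KJ: "K = 0" "J = t" by simp_all
        then show ?thesis using CF Sym MBit h u a by simp
      next
        case (MEnd ov)
        then obtain K l where h: "1 \<le> l" "v = bc K l" "t = length v" "ov = (2^l \<le> K)"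
          using mo Sym by auto
        have "take t v = v" using h by simp
        then have "K = 0" "l = t" using tv h by simp_all
        then show ?thesis using CF Sym MEnd h u a by simp
      next
        case MErr
        then show ?thesis using CF Sym errcase by simp
      qed
    qed
  next
    case (CE ov)
    then have tl: "t = length u" "1 \<le> length u" using sp by auto
    show ?thesis
    proof (cases "v = []")
      case True
      then have "m = Silent" using hm tl u by simp
      then show ?thesis using CE tl by simp
    next
      case False
      with hm have mo: "msgok v t m" by simp
      show ?thesis
      proof (cases m)
        case Silent then show ?thesis using CE tl by simp
      next
        case Border then show ?thesis using mo by simp
      next
        case (Sym z)
        show ?thesis
        proof (cases z)
          case (MBit y)
          then obtain K J where h: "t = K + J" "take (Suc t) v = bc K (Suc J)"
            using mo Sym by auto
          then show ?thesis using take_len[OF h(2)] tl u by (auto simp: min_def split: if_splits)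
        next
          case (MEnd ov')
          then show ?thesis using mo Sym tl u by auto
        next
          case MErr
          then show ?thesis using CE Sym errcase by simp
        qed
      qed
    qed
  next
    case CS
    then have tl: "length u < t" using sp by auto
    show ?thesis
    proof (cases "v = []")
      case True
      then have "m = Silent" using hm tl u by simp
      then show ?thesis using CS tl by simp
    next
      case False
      with hm have mo: "msgok v t m" by simp
      show ?thesis
      proof (cases m)
        case Silent then show ?thesis using CS tl by simp
      next
        case Border then show ?thesis using mo by simp
      next
        case (Sym z)
        show ?thesis
        proof (cases z)
          case (MBit y)
          then obtain K J where h: "t = K + J" "take (Suc t) v = bc K (Suc J)"
            using mo Sym by auto
          then show ?thesis using take_len[OF h(2)] tl u by (auto simp: min_def split: if_splits)
        next
          case (MEnd ov')
          then show ?thesis using mo Sym tl u by auto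
        next
          case MErr
          then show ?thesis using CS Sym errcase by simp
        qed
      qed
    qed
  next
    case (BE ov)
    then have "length u \<le> t" using sp by auto
    then show ?thesis using BE errcase by auto
  next
    case Acc
    then have "length u \<le> t" using sp by auto
    then show ?thesis using Acc errcase by auto
  next
    case Done
    then have "length u \<le> t" using sp by auto
    then show ?thesis using Done errcase by auto
  next
    case Err
    then show ?thesis using sp by simp
  qed
qed


lemma Phi_spec: "u \<noteq> [] \<Longrightarrow> spec u t (Phi t u)"
proof (induction t arbitrary: u)
  case 0
  then obtain a v where u: "u = a # v" by (cases u) auto
  show ?case using u by (cases a) (simp_all add: init_def bc_def)
next
  case (Suc t)
  then obtain a v where u: "u = a # v" by (cases u) auto
  define m where "m = (if length u \<le> 1 then (if t = 0 then Border else Silent)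
                      else to_msg (blS (Phi t (tl u))))"
  have hm: "if v = [] then m = (if t = 0 then Border else Silent) else msgok v t m"
  proof (cases "v = []")
    case True then show ?thesis using u m_def by simp
  next
    case False
    then have "msgok v t (to_msg (blS (Phi t v)))" using msg_lemma Suc.IH by blast
    then show ?thesis using u m_def False by simp
  qed
  have "spec u (Suc t) (dS m (Phi t u))"
    by (rule step[OF u Suc.IH[OF Suc.prems] hm])
  then show ?case by (simp add: m_def)
qed

definition cmap :: "nat cmsg \<Rightarrow> msg cmsg" where
  "cmap x = (case x of Sym n \<Rightarrow> Sym (from_nat n) | Border \<Rightarrow> Border | Silent \<Rightarrow> Silent)"

definition MM :: "(letter, nat, nat) ca" where
  "MM = \<lparr> states = range (to_nat :: st \<Rightarrow> nat), acc = {to_nat Acc},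
          inp = (\<lambda>a. to_nat (init a)), comm = range (to_nat :: msg \<Rightarrow> nat),
          bl = (\<lambda>n. map_option to_nat (blS (from_nat n))), br = (\<lambda>_. None),
          delta = (\<lambda>x n y. to_nat (dS (cmap y) (from_nat n))) \<rparr>"

lemma cmap_to_msg: "cmap (to_msg (map_option to_nat x)) = to_msg (x :: msg option)"
  by (cases x) (simp_all add: cmap_def to_msg_def)

lemma cfg:
  "1 \<le> i \<Longrightarrow> i \<le> length w \<Longrightarrow> oca_cfg MM w t i = to_nat (Phi t (drop (i-1) w))"
proof (induction t arbitrary: i)
  case 0
  then show ?case by (simp add: MM_def hd_drop_conv_nth)
next
  case (Suc t)
  have tl: "tl (drop (i-1) w) = drop i w"
    using Suc.prems by (metis Suc_diff_1 drop_Suc le_less_trans less_one not_le tl_drop)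
  have len: "(length (drop (i-1) w) \<le> 1) = (i = length w)" using Suc.prems by auto
  show ?case
  proof (cases "i = length w")
    case True
    then show ?thesis using Suc.IH[OF Suc.prems] len
      by (simp add: MM_def cmap_def)
  next
    case False
    then have "i + 1 \<le> length w" using Suc.prems by simp
    then have ih2: "oca_cfg MM w t (i+1) = to_nat (Phi t (drop i w))" using Suc.IH[of "i+1"] by simp
    show ?thesis using Suc.IH[OF Suc.prems] len False ih2 tl
      by (simp add: MM_def cmap_to_msg)
  qed
qed


lemma finite_st: "finite (UNIV :: st set)"
proof -
  have "(UNIV :: st set) = range BS \<union> range (case_prod BO) \<union> range BE \<union> range CF \<union> range CE
          \<union> {Acc, Done, FreshC, CS, Err}"
    by (rule set_eqI, case_tac x) auto
  then show ?thesis by (metis finite_Un finite_imageI finite finite.emptyI finite.insertI)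
qed

lemma finite_msg: "finite (UNIV :: msg set)"
proof -
  have "(UNIV :: msg set) = range MBit \<union> range MEnd \<union> {MErr}"
    by (rule set_eqI, case_tac x) auto
  then show ?thesis by (metis finite_Un finite_imageI finite finite.emptyI finite.insertI)
qed

lemma is_oca_MM: "is_oca MM"
  unfolding is_oca_def wf_ca_def
proof (intro conjI)
  show "finite (states MM)" using finite_st by (simp add: MM_def)
  show "finite (comm MM)" using finite_msg by (simp add: MM_def)
  show "inj (inp MM)" unfolding inj_def by (auto simp: MM_def init_def split: letter.splits)
  show "\<forall>s\<in>states MM. bl MM s \<in> Some ` comm MM \<union> {None}"
  proof
    fix s assume "s \<in> states MM"
    then obtain x :: st where "s = to_nat x" by (auto simp: MM_def)
    then show "bl MM s \<in> Some ` comm MM \<union> {None}"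
      by (cases "blS x") (auto simp: MM_def)
  qed
qed (auto simp: MM_def)

lemma Lbc_bc: "Lbc = {bc (2^m) m | m. 1 \<le> m}"
  unfolding Lbc_def bc_def by auto

lemma Phi_acc:
  assumes "1 \<le> m" and w: "w = bc (2^m) m"
  shows "Phi (length w) w = Acc"
proof -
  have ne: "w \<noteq> []" using w assms by (simp add: bc_def)
  have gw: "good w" using w assms good_def by blast
  have sp: "spec w (length w) (Phi (length w) w)" using Phi_spec[OF ne] .
  show ?thesis
  proof (cases "Phi (length w) w")
    case (BS x)
    then have "take (Suc (length w)) w = bc (Suc (length w)) 0" using sp by (simp only: spec.simps)
    from take_len[OF this] show ?thesis by (simp add: min_def split: if_splits)
  next
    case (BO x y)
    then obtain k j where "take (Suc (length w)) w = bc k (Suc j)" "length w = k + j"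
      using sp[unfolded BO spec.simps] by blast
    from take_len[OF this(1)] this(2) show ?thesis by (simp add: min_def split: if_splits)
  next
    case FreshC then show ?thesis using sp w by simp
  next
    case (CF x)
    then have "take (Suc (length w)) w = bc 0 (Suc (length w))" using sp by (simp only: spec.simps)
    from take_len[OF this] show ?thesis by (simp add: min_def split: if_splits)
  next
    case (CE x)
    then have "bc 0 (length w) = bc (2^m) m" using sp w by simp
    then show ?thesis by simp
  next
    case (BE x)
    then obtain k l where "bc k l = bc (2^m) m" "k \<noteq> 2^l" using sp w by auto
    then show ?thesis by simp
  next
    case Err then show ?thesis using sp gw by simp
  qed (use sp in auto)
qed

lemma init_not_acc: "init a \<noteq> Acc"
  by (cases a) (auto simp: init_def)

lemma acc_MM: "acc MM = {to_nat Acc}" by (simp add: MM_def)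

lemma acc_iff: "rt_accepts MM w \<longleftrightarrow> w \<in> Lbc"
proof (cases "w = []")
  case True
  have "\<not> rt_accepts MM w" using True init_not_acc by (auto simp: rt_accepts_def MM_def)
  moreover have "w \<notin> Lbc" using True by (auto simp: Lbc_def)
  ultimately show ?thesis by simp
next
  case False
  have l1: "1 \<le> length w" using False by (cases w) auto
  have c1: "oca_cfg MM w t (Suc 0) = to_nat (Phi t w)" for t using cfg[of 1 w t] l1 by simp
  have "rt_accepts MM w \<longleftrightarrow> (\<exists>t\<le>length w. Phi t w = Acc)"
    by (simp add: rt_accepts_def c1 acc_MM)
  also have "\<dots> \<longleftrightarrow> w \<in> Lbc"
  proof
    assume "\<exists>t\<le>length w. Phi t w = Acc"
    then obtain t where "Phi t w = Acc" by auto
    then have "spec w t Acc" using Phi_spec[OF False] by metis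
    then show "w \<in> Lbc" by (auto simp: Lbc_bc)
  next
    assume "w \<in> Lbc"
    then obtain m where "1 \<le> m" "w = bc (2^m) m" by (auto simp: Lbc_bc)
    then show "\<exists>t\<le>length w. Phi t w = Acc" using Phi_acc by blast
  qed
  finally show ?thesis .
qed

lemma drop_bc: "drop i (bc k l) = bc (k - i) (l - (i - k))"
  by (simp add: bc_def)

lemma nonsilent:
  assumes "1 \<le> l" "v = bc k l" "blS (Phi j v) \<noteq> None"
  shows "k \<le> j \<and> j \<le> k + l"
proof -
  have ne: "v \<noteq> []" using assms by (simp add: bc_def)
  have gv: "good v" using assms good_def by blast
  have sp: "spec v j (Phi j v)" using Phi_spec[OF ne] .
  have tk: "take (Suc j) v = bc K (Suc J) \<Longrightarrow> j = K + J \<Longrightarrow> k \<le> j \<and> j \<le> k + l" for K J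
  proof -
    assume h: "take (Suc j) v = bc K (Suc J)" and hj: "j = K + J"
    then have "bc (min (Suc j) k) (min (Suc j - k) l) = bc K (Suc J)"
      using assms(2) by (simp add: take_bc)
    then have "min (Suc j - k) l = Suc J" by simp
    then have "k \<le> j" by linarith
    moreover have "Suc j \<le> k + l" using take_len[OF h] assms(2) hj by (simp add: min_def split: if_splits)
    ultimately show ?thesis by simp
  qed
  show ?thesis
  proof (cases "Phi j v")
    case (BO x y)
    then obtain K J where "take (Suc j) v = bc K (Suc J)" "j = K + J" using sp by (simp only: spec.simps) blast
    then show ?thesis by (rule tk)
  next
    case (CF x)
    then have "take (Suc j) v = bc 0 (Suc j)" using sp by (simp only: spec.simps)
    then show ?thesis by (rule tk) simp
  next
    case FreshC then show ?thesis using sp assms by (cases k) (auto simp: bc_def)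
  next
    case (CE x)
    then have "bc 0 (length v) = bc k l" "j = length v" using sp assms by auto
    then show ?thesis by simp
  next
    case Err then show ?thesis using sp gv by simp
  qed (use sp assms in auto)
qed

lemma com_bound:
  assumes m: "1 \<le> m" and w: "w = bc (2^m) m" and i: "1 \<le> i" "i \<le> length w - 1"
  shows "com MM w i (length w) \<le> Suc m"
proof -
  define k where "k = 2^m - i"
  define l where "l = m - (i - 2^m)"
  have dv: "drop i w = bc k l" using w by (simp add: drop_bc k_def l_def)
  have l1: "1 \<le> l" "l \<le> m" using i w m by (auto simp: l_def)
  have S: "{j. j < length w \<and> (br MM (oca_cfg MM w j i) \<noteq> None \<or> bl MM (oca_cfg MM w j (i + 1)) \<noteq> None)}
           \<subseteq> {k..k+l}"
  proof
    fix j assume "j \<in> {j. j < length w \<and> (br MM (oca_cfg MM w j i) \<noteq> None \<or> bl MM (oca_cfg MM w j (i + 1)) \<noteq> None)}"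
    then have h: "bl MM (oca_cfg MM w j (i + 1)) \<noteq> None" by (simp add: MM_def)
    have "oca_cfg MM w j (i+1) = to_nat (Phi j (drop i w))" using cfg[of "i+1" w j] i by simp
    then have "blS (Phi j (bc k l)) \<noteq> None" using h dv by (simp add: MM_def)
    then show "j \<in> {k..k+l}" using nonsilent[OF l1(1) refl] by simp
  qed
  have "com MM w i (length w) \<le> card {k..k+l}"
    unfolding com_def by (rule card_mono[OF _ S]) simp
  then show ?thesis using l1 by simp
qed

lemma mcom_bound:
  assumes m: "1 \<le> m" and w: "w = bc (2^m) m"
  shows "mcom MM w \<le> Suc m"
proof -
  have fin: "finite {com MM w i (length w) | i. 1 \<le> i \<and> i \<le> length w - 1}"
    by (rule finite_subset[of _ "(\<lambda>i. com MM w i (length w)) ` {..length w}"]) auto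
  show ?thesis unfolding mcom_def using fin com_bound[OF m w] by (auto simp: Max_le_iff)
qed

lemma g_bigo: "(\<lambda>n::nat. log 2 (real n) + 1) \<in> O(\<lambda>n. ln (real n))"
proof (rule bigoI[where c = "1 / ln 2 + 1"])
  show "eventually (\<lambda>n::nat. norm (log 2 (real n) + 1) \<le> (1 / ln 2 + 1) * norm (ln (real n))) at_top"
  proof (rule eventually_at_top_linorderI[of 3])
    fix n :: nat assume n: "3 \<le> n"
    have l2: "0 < ln (2::real)" by simp
    have "exp 1 \<le> real n" using exp_le n by linarith
    then have ln1: "1 \<le> ln (real n)" using n by (subst ln_ge_iff) auto
    have lg: "log 2 (real n) = ln (real n) / ln 2" by (simp add: log_def)
    have "0 \<le> ln (real n) / ln 2" using ln1 l2 by simp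
    then show "norm (log 2 (real n) + 1) \<le> (1 / ln 2 + 1) * norm (ln (real n))"
      using ln1 l2 by (simp add: lg algebra_simps)
  qed
qed

theorem mainTheorem9:
  shows "in_rt_MC_OCA Lbc (\<lambda>n. ln (real n))"
  unfolding in_rt_MC_OCA_def
proof (rule exI[of _ MM], intro conjI)
  show "is_oca MM" by (rule is_oca_MM)
  show "{w. rt_accepts MM w} = Lbc" using acc_iff by auto
  show "\<exists>g. g \<in> O(\<lambda>n. ln (real n)) \<and> (\<forall>w. rt_accepts MM w \<longrightarrow> real (mcom MM w) \<le> g (length w))"
  proof (rule exI[of _ "\<lambda>n. log 2 (real n) + 1"], intro conjI allI impI)
    show "(\<lambda>n::nat. log 2 (real n) + 1) \<in> O(\<lambda>n. ln (real n))" by (rule g_bigo)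
    fix w assume "rt_accepts MM w"
    then obtain m where m: "1 \<le> m" "w = bc (2^m) m" using acc_iff by (auto simp: Lbc_bc)
    have "2^m \<le> length w" using m by simp
    then have "real m \<le> log 2 (real (length w))" by (rule le_log2_of_power)
    moreover have "mcom MM w \<le> Suc m" by (rule mcom_bound[OF m])
    ultimately show "real (mcom MM w) \<le> log 2 (real (length w)) + 1" by linarith
  qed
qed

end
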